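(* For every $n\ge1$, the reflexive $n$-path graph $I_n$ and the terminal graph $K^1$, regarded as simplicial complexes, are cofibrant in the Thomason model structure on $\mathbf{Cpx}$, and the inclusion $K^1\hookrightarrow I_n$ of the terminal graph as an endpoint of $I_n$ is a Thomason cofibration.
   Context: A simplicial complex consists of a vertex set and a collection of nonempty finite subsets (simplices) containing all singletons and closed under nonempty subsets; maps are vertex functions preserving simplices; $\mathbf{Cpx}$ is the category. Reflexive graphs are the complexes whose simplices have at most two elements. $I_n$ has vertices $0,\dots,n$ and edges $\{i,i+1\}$; $K^1$ is the one-vertex graph. $\mathbf{\Delta}^n$ is the complex on $\{0,\dots,n\}$ with all nonempty subsets simplices, $\mathrm{Sing}(K)_n=\mathbf{Cpx}(\mathbf{\Delta}^n,K)$, $\mathrm{Ex}$ is the right adjoint of barycentric subdivision. Thomason model structure on $\mathbf{Cpx}$: $f$ is a weak equivalence iff $\mathrm{Sing}(f)$ is a weak homotopy equivalence, a fibration iff $\mathrm{Ex}^2\mathrm{Sing}(f)$ is a Kan fibration, and a cofibration iff it has the left lifting property against all trivial fibrations. *)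

theory Defs
  imports "HOL-Analysis.Analysis" "HOL-Homology.Homology"
begin

text \<open>A monotone map theta : [m] -> [n] (only its values on 0..m matter).\<close>
definition mono_op :: "nat \<Rightarrow> nat \<Rightarrow> (nat \<Rightarrow> nat) \<Rightarrow> bool" where
  "mono_op m n \<theta> \<longleftrightarrow> (\<forall>i\<le>m. \<theta> i \<le> n) \<and> (\<forall>i j. i \<le> j \<and> j \<le> m \<longrightarrow> \<theta> i \<le> \<theta> j)"

text \<open>A simplicial set: levels X_n (pairwise disjoint, a harmless representation convention)
  and the contravariant action: act n m theta x = theta^* x for x in X_n, theta : [m] -> [n].\<close>
record 'a sset =
  lev :: "nat \<Rightarrow> 'a set"
  act :: "nat \<Rightarrow> nat \<Rightarrow> (nat \<Rightarrow> nat) \<Rightarrow> 'a \<Rightarrow> 'a"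

definition is_sset :: "'a sset \<Rightarrow> bool" where
  "is_sset X \<longleftrightarrow>
     (\<forall>m n. m \<noteq> n \<longrightarrow> lev X m \<inter> lev X n = {}) \<and>
     (\<forall>n m \<theta> x. mono_op m n \<theta> \<and> x \<in> lev X n \<longrightarrow> act X n m \<theta> x \<in> lev X m) \<and>
     (\<forall>n x. x \<in> lev X n \<longrightarrow> act X n n id x = x) \<and>
     (\<forall>n m \<theta> \<theta>' x. mono_op m n \<theta> \<and> x \<in> lev X n \<and> (\<forall>i\<le>m. \<theta> i = \<theta>' i)
        \<longrightarrow> act X n m \<theta> x = act X n m \<theta>' x) \<and>
     (\<forall>n m k \<theta> \<psi> x. mono_op m n \<theta> \<and> mono_op k m \<psi> \<and> x \<in> lev X n
        \<longrightarrow> act X n k (\<theta> \<circ> \<psi>) x = act X m k \<psi> (act X n m \<theta> x))"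

definition smap :: "'a sset \<Rightarrow> 'b sset \<Rightarrow> ('a \<Rightarrow> 'b) \<Rightarrow> bool" where
  "smap X Y f \<longleftrightarrow> (\<forall>n x. x \<in> lev X n \<longrightarrow> f x \<in> lev Y n \<and>
      (\<forall>m \<theta>. mono_op m n \<theta> \<longrightarrow> f (act X n m \<theta> x) = act Y n m \<theta> (f x)))"

definition coface :: "nat \<Rightarrow> nat \<Rightarrow> nat" where
  "coface i = (\<lambda>j. if j < i then j else Suc j)"

definition face :: "'a sset \<Rightarrow> nat \<Rightarrow> nat \<Rightarrow> 'a \<Rightarrow> 'a" where
  "face X n i x = act X n (n - 1) (coface i) x"

text \<open>Kan fibration: right lifting property against all horn inclusions
  Lambda^n_k -> Delta^n (n >= 1); a map from the horn is a compatible family of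
  (n-1)-simplices y_i, i /= k, with d_i y_j = d_(j-1) y_i for i < j.\<close>
definition kan_fib :: "'a sset \<Rightarrow> 'b sset \<Rightarrow> ('a \<Rightarrow> 'b) \<Rightarrow> bool" where
  "kan_fib E B p \<longleftrightarrow> smap E B p \<and>
     (\<forall>n k y b. 1 \<le> n \<and> k \<le> n \<and>
        (\<forall>i\<le>n. i \<noteq> k \<longrightarrow> y i \<in> lev E (n - 1)) \<and>
        (\<forall>i j. i < j \<and> j \<le> n \<and> i \<noteq> k \<and> j \<noteq> k \<longrightarrow>
            face E (n - 1) i (y j) = face E (n - 1) (j - 1) (y i)) \<and>
        b \<in> lev B n \<and> (\<forall>i\<le>n. i \<noteq> k \<longrightarrow> face B n i b = p (y i))
      \<longrightarrow> (\<exists>z\<in>lev E n. p z = b \<and> (\<forall>i\<le>n. i \<noteq> k \<longrightarrow> face E n i z = y i)))"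

text \<open>theta_* : Delta^m -> Delta^n on barycentric coordinates.\<close>
definition simplex_push :: "nat \<Rightarrow> (nat \<Rightarrow> nat) \<Rightarrow> (nat \<Rightarrow> real) \<Rightarrow> (nat \<Rightarrow> real)" where
  "simplex_push m \<theta> t = (\<lambda>j. \<Sum>i\<in>{i. i \<le> m \<and> \<theta> i = j}. t i)"

definition real_base :: "'a sset \<Rightarrow> (nat \<times> ('a \<times> (nat \<Rightarrow> real))) topology" where
  "real_base X = sum_topology
     (\<lambda>n. prod_topology (discrete_topology (lev X n))
            (subtopology (powertop_real UNIV) (standard_simplex n))) UNIV"

definition real_rel :: "'a sset \<Rightarrow> ((nat \<times> ('a \<times> (nat \<Rightarrow> real))) \<times> (nat \<times> ('a \<times> (nat \<Rightarrow> real)))) set" where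
  "real_rel X = {((m, (act X n m \<theta> x, t)), (n, (x, simplex_push m \<theta> t))) | n m \<theta> x t.
       mono_op m n \<theta> \<and> x \<in> lev X n \<and> t \<in> standard_simplex m}"

definition real_eq :: "'a sset \<Rightarrow> ((nat \<times> ('a \<times> (nat \<Rightarrow> real))) \<times> (nat \<times> ('a \<times> (nat \<Rightarrow> real)))) set" where
  "real_eq X = (real_rel X \<union> (real_rel X)\<inverse>)\<^sup>*"

definition quotient_top :: "'p topology \<Rightarrow> ('p \<times> 'p) set \<Rightarrow> 'p set topology" where
  "quotient_top T E = topology (\<lambda>U. U \<subseteq> topspace T // E \<and>
      openin T {y \<in> topspace T. E `` {y} \<in> U})"

definition realize :: "'a sset \<Rightarrow> (nat \<times> ('a \<times> (nat \<Rightarrow> real))) set topology" where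
  "realize X = quotient_top (real_base X) (real_eq X)"

definition realize_map :: "'b sset \<Rightarrow> ('a \<Rightarrow> 'b) \<Rightarrow> (nat \<times> ('a \<times> (nat \<Rightarrow> real))) set \<Rightarrow> (nat \<times> ('b \<times> (nat \<Rightarrow> real))) set" where
  "realize_map Y f U = real_eq Y `` ((\<lambda>(n, x, t). (n, (f x, t))) ` U)"

definition sphere_base :: "nat \<Rightarrow> real" where
  "sphere_base = (\<lambda>i. if i = 0 then 1 else 0)"

text \<open>Weak homotopy equivalence of topological spaces: bijection on pi_0 and on all
  pi_n (n >= 1) at every basepoint (pointed homotopy classes of maps from S^n).\<close>
definition weak_homotopy_equivalence :: "'a topology \<Rightarrow> 'b topology \<Rightarrow> ('a \<Rightarrow> 'b) \<Rightarrow> bool" where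
  "weak_homotopy_equivalence T T' g \<longleftrightarrow> continuous_map T T' g \<and>
     (\<forall>y\<in>topspace T'. \<exists>x\<in>topspace T. path_component_of T' (g x) y) \<and>
     (\<forall>x\<in>topspace T. \<forall>x'\<in>topspace T. path_component_of T' (g x) (g x') \<longrightarrow> path_component_of T x x') \<and>
     (\<forall>n\<ge>1. \<forall>x\<in>topspace T.
        (\<forall>h. continuous_map (nsphere n) T' h \<and> h sphere_base = g x \<longrightarrow>
           (\<exists>k. continuous_map (nsphere n) T k \<and> k sphere_base = x \<and>
                homotopic_with (\<lambda>h'. h' sphere_base = g x) (nsphere n) T' (g \<circ> k) h)) \<and>
        (\<forall>k k'. continuous_map (nsphere n) T k \<and> k sphere_base = x \<and>
                continuous_map (nsphere n) T k' \<and> k' sphere_base = x \<and>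
                homotopic_with (\<lambda>h'. h' sphere_base = g x) (nsphere n) T' (g \<circ> k) (g \<circ> k')
           \<longrightarrow> homotopic_with (\<lambda>h'. h' sphere_base = x) (nsphere n) T k k'))"

definition sset_weq :: "'a sset \<Rightarrow> 'b sset \<Rightarrow> ('a \<Rightarrow> 'b) \<Rightarrow> bool" where
  "sset_weq X Y f \<longleftrightarrow> smap X Y f \<and>
     weak_homotopy_equivalence (realize X) (realize Y) (realize_map Y f)"

text \<open>k-simplices of sd Delta^n = nerve of the poset of nonempty subsets of [n].\<close>
definition sd_chains :: "nat \<Rightarrow> nat \<Rightarrow> nat set list set" where
  "sd_chains n k = {cs. length cs = Suc k \<and> (\<forall>c\<in>set cs. c \<noteq> {} \<and> c \<subseteq> {0..n}) \<and>
      (\<forall>i j. i \<le> j \<and> j \<le> k \<longrightarrow> cs ! i \<subseteq> cs ! j)}"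

definition sd_all :: "nat \<Rightarrow> nat set list set" where
  "sd_all n = (\<Union>k. sd_chains n k)"

definition list_act :: "nat \<Rightarrow> (nat \<Rightarrow> nat) \<Rightarrow> 'x list \<Rightarrow> 'x list" where
  "list_act m \<theta> xs = map (\<lambda>i. xs ! \<theta> i) [0..<Suc m]"

text \<open>(Ex X)_n = simplicial maps sd Delta^n -> X.\<close>
definition Ex :: "'a sset \<Rightarrow> (nat \<times> (nat set list \<Rightarrow> 'a)) sset" where
  "Ex X = \<lparr> lev = (\<lambda>n. {(n', g). n' = n \<and> g \<in> extensional (sd_all n) \<and>
              (\<forall>k cs. cs \<in> sd_chains n k \<longrightarrow> g cs \<in> lev X k) \<and>
              (\<forall>k m \<theta> cs. cs \<in> sd_chains n k \<and> mono_op m k \<theta> \<longrightarrow>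
                  g (list_act m \<theta> cs) = act X k m \<theta> (g cs))}),
           act = (\<lambda>n m \<theta> (n', g). (m, restrict (\<lambda>cs. g (map (\<lambda>c. \<theta> ` c) cs)) (sd_all m))) \<rparr>"

definition Ex_map :: "('a \<Rightarrow> 'b) \<Rightarrow> (nat \<times> (nat set list \<Rightarrow> 'a)) \<Rightarrow> (nat \<times> (nat set list \<Rightarrow> 'b))" where
  "Ex_map f = (\<lambda>(n, g). (n, restrict (f \<circ> g) (sd_all n)))"

type_synonym 'v cpx = "'v set \<times> 'v set set"

definition is_cpx :: "'v cpx \<Rightarrow> bool" where
  "is_cpx K \<longleftrightarrow> snd K \<subseteq> Pow (fst K) \<and> (\<forall>\<sigma>\<in>snd K. \<sigma> \<noteq> {} \<and> finite \<sigma>) \<and>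
     (\<forall>v\<in>fst K. {v} \<in> snd K) \<and> (\<forall>\<sigma>\<in>snd K. \<forall>\<tau>. \<tau> \<noteq> {} \<and> \<tau> \<subseteq> \<sigma> \<longrightarrow> \<tau> \<in> snd K)"

definition cmap :: "'v cpx \<Rightarrow> 'w cpx \<Rightarrow> ('v \<Rightarrow> 'w) \<Rightarrow> bool" where
  "cmap K L f \<longleftrightarrow> (\<forall>v\<in>fst K. f v \<in> fst L) \<and> (\<forall>\<sigma>\<in>snd K. f ` \<sigma> \<in> snd L)"

text \<open>Sing(K)_n = Cpx(Delta^n, K): lists of n+1 vertices spanning a simplex.\<close>
definition Sing :: "'v cpx \<Rightarrow> 'v list sset" where
  "Sing K = \<lparr> lev = (\<lambda>n. {xs. length xs = Suc n \<and> set xs \<in> snd K}),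
              act = (\<lambda>n m \<theta> xs. list_act m \<theta> xs) \<rparr>"

definition Sing_map :: "('v \<Rightarrow> 'w) \<Rightarrow> 'v list \<Rightarrow> 'w list" where
  "Sing_map f = map f"

definition thomason_weq :: "'v cpx \<Rightarrow> 'w cpx \<Rightarrow> ('v \<Rightarrow> 'w) \<Rightarrow> bool" where
  "thomason_weq K L f \<longleftrightarrow> sset_weq (Sing K) (Sing L) (Sing_map f)"

definition thomason_fib :: "'v cpx \<Rightarrow> 'w cpx \<Rightarrow> ('v \<Rightarrow> 'w) \<Rightarrow> bool" where
  "thomason_fib K L f \<longleftrightarrow>
     kan_fib (Ex (Ex (Sing K))) (Ex (Ex (Sing L))) (Ex_map (Ex_map (Sing_map f)))"

definition thomason_trivial_fib :: "'v cpx \<Rightarrow> 'w cpx \<Rightarrow> ('v \<Rightarrow> 'w) \<Rightarrow> bool" where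
  "thomason_trivial_fib K L f \<longleftrightarrow> is_cpx K \<and> is_cpx L \<and> cmap K L f \<and>
     thomason_weq K L f \<and> thomason_fib K L f"

definition llp :: "'a cpx \<Rightarrow> 'x cpx \<Rightarrow> ('a \<Rightarrow> 'x) \<Rightarrow> 'e cpx \<Rightarrow> 'b cpx \<Rightarrow> ('e \<Rightarrow> 'b) \<Rightarrow> bool" where
  "llp A X i E B p \<longleftrightarrow> (\<forall>a b. cmap A E a \<and> cmap X B b \<and> (\<forall>v\<in>fst A. p (a v) = b (i v)) \<longrightarrow>
      (\<exists>h. cmap X E h \<and> (\<forall>v\<in>fst A. h (i v) = a v) \<and> (\<forall>v\<in>fst X. p (h v) = b v)))"

text \<open>Cofibration: LLP against all trivial fibrations E -> B, where the vertex types
  'e, 'b are arbitrary (in the main theorem they are free, hence universally quantified).\<close>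
definition thomason_cofib :: "'e itself \<Rightarrow> 'b itself \<Rightarrow> 'a cpx \<Rightarrow> 'x cpx \<Rightarrow> ('a \<Rightarrow> 'x) \<Rightarrow> bool" where
  "thomason_cofib _ _ A X i \<longleftrightarrow> is_cpx A \<and> is_cpx X \<and> cmap A X i \<and>
     (\<forall>(E::'e cpx) (B::'b cpx) p. thomason_trivial_fib E B p \<longrightarrow> llp A X i E B p)"

definition empty_cpx :: "'v cpx" where
  "empty_cpx = ({}, {})"

definition thomason_cofibrant :: "'e itself \<Rightarrow> 'b itself \<Rightarrow> 'x cpx \<Rightarrow> bool" where
  "thomason_cofibrant te tb X \<longleftrightarrow> thomason_cofib te tb (empty_cpx :: 'x cpx) X (\<lambda>_. undefined)"

definition path_graph :: "nat \<Rightarrow> nat cpx" where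
  "path_graph n = ({0..n}, {{i} | i. i \<le> n} \<union> {{i, Suc i} | i. i < n})"

definition K1 :: "unit cpx" where
  "K1 = ({()}, {{()}})"

end

theory Submission
  imports Defs
begin


lemma sd_all_iff: "cs \<in> sd_all n \<longleftrightarrow> cs \<in> sd_chains n (length cs - 1)"
proof
  assume "cs \<in> sd_all n"
  then obtain k where "cs \<in> sd_chains n k" unfolding sd_all_def by auto
  moreover then have "k = length cs - 1" unfolding sd_chains_def by auto
  ultimately show "cs \<in> sd_chains n (length cs - 1)" by simp
qed (auto simp: sd_all_def)

lemma chain_len: "cs \<in> sd_chains n k \<Longrightarrow> length cs = Suc k"
  unfolding sd_chains_def by auto

lemma chain_elem: "cs \<in> sd_chains n k \<Longrightarrow> i \<le> k \<Longrightarrow> cs ! i \<noteq> {} \<and> cs ! i \<subseteq> {0..n}"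
  unfolding sd_chains_def by (auto dest!: nth_mem[of i cs])

lemma chain_elem_set: "cs \<in> sd_chains n k \<Longrightarrow> S \<in> set cs \<Longrightarrow> S \<noteq> {} \<and> S \<subseteq> {0..n}"
  unfolding sd_chains_def by auto

lemma list_act_len[simp]: "length (list_act m \<theta> xs) = Suc m"
  unfolding list_act_def by simp

lemma list_act_nth: "i \<le> m \<Longrightarrow> list_act m \<theta> xs ! i = xs ! \<theta> i"
  unfolding list_act_def by (simp del: upt_Suc)

lemma list_act_chain:
  assumes "cs \<in> sd_chains n k" "mono_op m k \<theta>"
  shows "list_act m \<theta> cs \<in> sd_chains n m"
proof -
  have L: "length cs = Suc k" using assms(1) by (rule chain_len)
  have "\<forall>c\<in>set (list_act m \<theta> cs). c \<noteq> {} \<and> c \<subseteq> {0..n}"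
  proof
    fix c assume "c \<in> set (list_act m \<theta> cs)"
    then have "c \<in> (\<lambda>i. cs ! \<theta> i) ` {0..<Suc m}" unfolding list_act_def by (simp only: set_map set_upt)
    then obtain i where i: "i < Suc m" and ci: "c = cs ! \<theta> i" by auto
    from i have "i \<le> m" by simp
    then have "\<theta> i \<le> k" using assms(2) unfolding mono_op_def by blast
    then show "c \<noteq> {} \<and> c \<subseteq> {0..n}" using ci chain_elem[OF assms(1)] by simp
  qed
  moreover have "\<forall>i j. i \<le> j \<and> j \<le> m \<longrightarrow> list_act m \<theta> cs ! i \<subseteq> list_act m \<theta> cs ! j"
  proof (intro allI impI)
    fix i j assume ij: "i \<le> j \<and> j \<le> m"
    then have "\<theta> i \<le> \<theta> j" "\<theta> j \<le> k" using assms(2) unfolding mono_op_def by auto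
    then have "cs ! \<theta> i \<subseteq> cs ! \<theta> j" using assms(1) unfolding sd_chains_def by blast
    then show "list_act m \<theta> cs ! i \<subseteq> list_act m \<theta> cs ! j" using ij by (simp add: list_act_nth)
  qed
  ultimately show ?thesis unfolding sd_chains_def by simp
qed

lemma map_img_chain:
  assumes "c \<in> sd_chains m j" "mono_op m k \<theta>"
  shows "map (\<lambda>S. \<theta> ` S) c \<in> sd_chains k j"
  using assms unfolding sd_chains_def mono_op_def
  by (auto simp: image_mono) (metis atLeastAtMost_iff le0 subsetD)

lemma Max_img:
  assumes "mono_op m k \<theta>" "S \<subseteq> {0..m}" "S \<noteq> {}"
  shows "Max (\<theta> ` S) = \<theta> (Max S)"
proof -
  have f: "finite S" using assms(2) finite_subset by blast
  have M: "Max S \<in> S" using f assms(3) by simp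
  show ?thesis
  proof (rule Max_eqI)
    show "finite (\<theta> ` S)" using f by simp
    show "\<theta> (Max S) \<in> \<theta> ` S" using M by simp
    fix y assume "y \<in> \<theta> ` S"
    then obtain s where "s \<in> S" "y = \<theta> s" by auto
    moreover have "s \<le> Max S" using f \<open>s \<in> S\<close> by simp
    moreover have "Max S \<le> m" using M assms(2) by auto
    ultimately show "y \<le> \<theta> (Max S)" using assms(1) unfolding mono_op_def by auto
  qed
qed



definition exx :: "nat \<Rightarrow> (nat \<Rightarrow> 'v) \<Rightarrow> nat \<times> (nat set list \<Rightarrow> nat \<times> (nat set list \<Rightarrow> 'v list))" where
  "exx n \<psi> = (n, restrict (\<lambda>cs. (length cs - 1,
      restrict (\<lambda>c. map (\<lambda>S. \<psi> (Max (cs ! Max S))) c) (sd_all (length cs - 1)))) (sd_all n))"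

lemma Max_le_chain:
  assumes "c \<in> sd_chains k j" "S \<in> set c"
  shows "Max S \<le> k" "Max S \<in> S"
proof -
  have ne: "S \<noteq> {}" and sub: "S \<subseteq> {0..k}" using chain_elem_set[OF assms] by auto
  have fin: "finite S" using sub finite_subset by blast
  show "Max S \<in> S" using fin ne by simp
  then show "Max S \<le> k" using sub by auto
qed

lemma Ex_levI:
  "g \<in> extensional (sd_all n) \<Longrightarrow> (\<And>k cs. cs \<in> sd_chains n k \<Longrightarrow> g cs \<in> lev X k) \<Longrightarrow>
   (\<And>k m \<theta> cs. cs \<in> sd_chains n k \<Longrightarrow> mono_op m k \<theta> \<Longrightarrow> g (list_act m \<theta> cs) = act X k m \<theta> (g cs))
   \<Longrightarrow> (n, g) \<in> lev (Ex X) n"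
  by (simp add: Ex_def)

lemma exx_lev:
  assumes cpx: "is_cpx B" and H: "\<psi> ` {0..n} \<in> snd B"
  shows "exx n \<psi> \<in> lev (Ex (Ex (Sing B))) n"
proof -
  define F where "F cs = (length cs - 1,
      restrict (\<lambda>c. map (\<lambda>S. \<psi> (Max (cs ! Max S))) c) (sd_all (length cs - 1)))" for cs :: "nat set list"
  have ex: "exx n \<psi> = (n, restrict F (sd_all n))" unfolding exx_def F_def by simp
  have val: "\<psi> (Max (cs ! Max S)) \<in> \<psi> ` {0..n}" if "cs \<in> sd_chains n k" "c \<in> sd_chains k j" "S \<in> set c" for cs k c j S
  proof -
    have "Max S \<le> k" using Max_le_chain that(2,3) by blast
    then have "Max (cs ! Max S) \<le> n" using Max_le_chain[OF that(1), of "cs ! Max S"] chain_len[OF that(1)] by simp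
    then show ?thesis by simp
  qed
  have Flev: "F cs \<in> lev (Ex (Sing B)) k" if cs: "cs \<in> sd_chains n k" for cs k
  proof -
    have L: "length cs - 1 = k" using chain_len[OF cs] by simp
    let ?g = "restrict (\<lambda>c. map (\<lambda>S. \<psi> (Max (cs ! Max S))) c) (sd_all k)"
    have F: "F cs = (k, ?g)" unfolding F_def L by simp
    have A: "?g c \<in> lev (Sing B) j" if c: "c \<in> sd_chains k j" for c j
    proof -
      have "c \<in> sd_all k" using c sd_all_iff chain_len by fastforce
      then have gc: "?g c = map (\<lambda>S. \<psi> (Max (cs ! Max S))) c" by simp
      have "set (?g c) \<subseteq> \<psi> ` {0..n}" using val[OF cs c] gc by auto
      moreover have "set (?g c) \<noteq> {}" using gc chain_len[OF c] by (cases c) auto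
      ultimately have "set (?g c) \<in> snd B" using cpx H unfolding is_cpx_def by blast
      then show ?thesis using gc chain_len[OF c] by (simp add: Sing_def)
    qed
    have C: "?g (list_act m \<theta> c) = act (Sing B) j m \<theta> (?g c)" if c: "c \<in> sd_chains k j" "mono_op m j \<theta>" for c j m \<theta>
    proof -
      have "c \<in> sd_all k" using c sd_all_iff chain_len by fastforce
      moreover have "list_act m \<theta> c \<in> sd_all k" using list_act_chain[OF c] sd_all_iff chain_len by fastforce
      moreover have "\<theta> i < length c" if "i \<le> m" for i using c that chain_len[OF c(1)] unfolding mono_op_def by auto
      ultimately show ?thesis by (simp add: Sing_def list_act_def del: upt_Suc)
    qed
    show ?thesis unfolding F by (rule Ex_levI) (use A C in auto)
  qed
  have Fcomp: "F (list_act m \<theta> cs) = act (Ex (Sing B)) k m \<theta> (F cs)" if cs: "cs \<in> sd_chains n k" and th: "mono_op m k \<theta>" for cs k m \<theta>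
  proof -
    have L: "length cs - 1 = k" using chain_len[OF cs] by simp
    have L2: "length (list_act m \<theta> cs) - 1 = m" by simp
    have "restrict (\<lambda>c. map (\<lambda>S. \<psi> (Max (list_act m \<theta> cs ! Max S))) c) (sd_all m) =
          restrict (\<lambda>c. restrict (\<lambda>c. map (\<lambda>S. \<psi> (Max (cs ! Max S))) c) (sd_all k) (map ((`) \<theta>) c)) (sd_all m)"
    proof (rule restrict_ext)
      fix c assume "c \<in> sd_all m"
      then have c: "c \<in> sd_chains m (length c - 1)" using sd_all_iff by blast
      have mc: "map ((`) \<theta>) c \<in> sd_all k" using map_img_chain[OF c th] sd_all_iff chain_len by fastforce
      have "\<psi> (Max (list_act m \<theta> cs ! Max S)) = \<psi> (Max (cs ! Max (\<theta> ` S)))" if "S \<in> set c" for S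
      proof -
        have "Max S \<le> m" using Max_le_chain[OF c that] by simp
        moreover have "S \<noteq> {}" "S \<subseteq> {0..m}" using chain_elem_set[OF c that] by auto
        ultimately show ?thesis using Max_img[OF th] by (simp add: list_act_nth)
      qed
      then show "map (\<lambda>S. \<psi> (Max (list_act m \<theta> cs ! Max S))) c =
          restrict (\<lambda>c. map (\<lambda>S. \<psi> (Max (cs ! Max S))) c) (sd_all k) (map ((`) \<theta>) c)"
        using mc by simp
    qed
    then show ?thesis unfolding F_def L L2 by (simp add: Ex_def)
  qed
  have ext: "restrict F (sd_all n) \<in> extensional (sd_all n)" by simp
  have sdc: "cs \<in> sd_chains n k \<Longrightarrow> cs \<in> sd_all n" for cs k using sd_all_def by blast
  show ?thesis unfolding ex
  proof (rule Ex_levI[OF ext])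
    fix k cs assume "cs \<in> sd_chains n k"
    then show "restrict F (sd_all n) cs \<in> lev (Ex (Sing B)) k" using Flev sdc by simp
  next
    fix k m \<theta> cs assume "cs \<in> sd_chains n k" "mono_op m k \<theta>"
    then show "restrict F (sd_all n) (list_act m \<theta> cs) = act (Ex (Sing B)) k m \<theta> (restrict F (sd_all n) cs)"
    proof -
      have "list_act m \<theta> cs \<in> sd_all n" using list_act_chain sdc \<open>cs \<in> sd_chains n k\<close> \<open>mono_op m k \<theta>\<close> by blast
      then show ?thesis using Fcomp sdc \<open>cs \<in> sd_chains n k\<close> \<open>mono_op m k \<theta>\<close> by simp
    qed
  qed
qed



lemma exx_cong:
  assumes "\<forall>i\<le>n. \<psi> i = \<psi>' i"
  shows "exx n \<psi> = exx n \<psi>'"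
proof -
  have "(\<lambda>cs\<in>sd_all n. (length cs - 1,
      restrict (\<lambda>c. map (\<lambda>S. \<psi> (Max (cs ! Max S))) c) (sd_all (length cs - 1))))
    = (\<lambda>cs\<in>sd_all n. (length cs - 1,
      restrict (\<lambda>c. map (\<lambda>S. \<psi>' (Max (cs ! Max S))) c) (sd_all (length cs - 1))))"
  proof (rule restrict_ext)
    fix cs assume cs: "cs \<in> sd_all n"
    have cs': "cs \<in> sd_chains n (length cs - 1)" using cs sd_all_iff by blast
    have "restrict (\<lambda>c. map (\<lambda>S. \<psi> (Max (cs ! Max S))) c) (sd_all (length cs - 1))
      = restrict (\<lambda>c. map (\<lambda>S. \<psi>' (Max (cs ! Max S))) c) (sd_all (length cs - 1))"
    proof (rule restrict_ext)
      fix c assume c: "c \<in> sd_all (length cs - 1)"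
      have c': "c \<in> sd_chains (length cs - 1) (length c - 1)" using c sd_all_iff by blast
      have "\<psi> (Max (cs ! Max S)) = \<psi>' (Max (cs ! Max S))" if "S \<in> set c" for S
      proof -
        have "Max S \<le> length cs - 1" using Max_le_chain[OF c' that] by simp
        then have "cs ! Max S \<in> set cs" using chain_len[OF cs'] by simp
        then have "Max (cs ! Max S) \<le> n" using Max_le_chain[OF cs'] by blast
        then show ?thesis using assms by simp
      qed
      then show "map (\<lambda>S. \<psi> (Max (cs ! Max S))) c = map (\<lambda>S. \<psi>' (Max (cs ! Max S))) c" by simp
    qed
    then show "(length cs - 1,
      restrict (\<lambda>c. map (\<lambda>S. \<psi> (Max (cs ! Max S))) c) (sd_all (length cs - 1))) = (length cs - 1,
      restrict (\<lambda>c. map (\<lambda>S. \<psi>' (Max (cs ! Max S))) c) (sd_all (length cs - 1)))" by simp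
  qed
  then show ?thesis unfolding exx_def by simp
qed

lemma exx_act:
  assumes th: "mono_op m n \<theta>"
  shows "act (Ex (Ex X)) n m \<theta> (exx n \<psi>) = exx m (\<psi> \<circ> \<theta>)"
proof -
  have "(\<lambda>cs\<in>sd_all m. (\<lambda>cs\<in>sd_all n. (length cs - 1,
      restrict (\<lambda>c. map (\<lambda>S. \<psi> (Max (cs ! Max S))) c) (sd_all (length cs - 1)))) (map ((`) \<theta>) cs))
    = (\<lambda>cs\<in>sd_all m. (length cs - 1,
      restrict (\<lambda>c. map (\<lambda>S. (\<psi> \<circ> \<theta>) (Max (cs ! Max S))) c) (sd_all (length cs - 1))))"
  proof (rule restrict_ext)
    fix cs assume cs: "cs \<in> sd_all m"
    have cs': "cs \<in> sd_chains m (length cs - 1)" using cs sd_all_iff by blast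
    have mc: "map ((`) \<theta>) cs \<in> sd_all n" using map_img_chain[OF cs' th] sd_all_iff chain_len by fastforce
    have "restrict (\<lambda>c. map (\<lambda>S. \<psi> (Max (map ((`) \<theta>) cs ! Max S))) c) (sd_all (length cs - 1))
       = restrict (\<lambda>c. map (\<lambda>S. (\<psi> \<circ> \<theta>) (Max (cs ! Max S))) c) (sd_all (length cs - 1))"
    proof (rule restrict_ext)
      fix c assume c: "c \<in> sd_all (length cs - 1)"
      have c': "c \<in> sd_chains (length cs - 1) (length c - 1)" using c sd_all_iff by blast
      have "\<psi> (Max (map ((`) \<theta>) cs ! Max S)) = (\<psi> \<circ> \<theta>) (Max (cs ! Max S))" if "S \<in> set c" for S
      proof -
        have "Max S \<le> length cs - 1" using Max_le_chain[OF c' that] by simp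
        then have l: "Max S < length cs" using chain_len[OF cs'] by simp
        then have "cs ! Max S \<in> set cs" by simp
        then have "cs ! Max S \<noteq> {}" "cs ! Max S \<subseteq> {0..m}" using chain_elem_set[OF cs'] by auto
        then show ?thesis using l Max_img[OF th] by simp
      qed
      then show "map (\<lambda>S. \<psi> (Max (map ((`) \<theta>) cs ! Max S))) c = map (\<lambda>S. (\<psi> \<circ> \<theta>) (Max (cs ! Max S))) c"
        by simp
    qed
    then show "(\<lambda>cs\<in>sd_all n. (length cs - 1,
      restrict (\<lambda>c. map (\<lambda>S. \<psi> (Max (cs ! Max S))) c) (sd_all (length cs - 1)))) (map ((`) \<theta>) cs)
      = (length cs - 1, restrict (\<lambda>c. map (\<lambda>S. (\<psi> \<circ> \<theta>) (Max (cs ! Max S))) c) (sd_all (length cs - 1)))"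
      using mc by simp
  qed
  then show ?thesis unfolding exx_def by (simp add: Ex_def)
qed

lemma exx_map: "Ex_map (Ex_map (Sing_map p)) (exx n \<psi>) = exx n (p \<circ> \<psi>)"
  unfolding exx_def Ex_map_def Sing_map_def
  by (auto intro!: restrict_ext simp: fun_eq_iff)



lemma path_lift:
  assumes tf: "thomason_trivial_fib E B p" and e: "e \<in> fst E" and eb: "{p e, b1} \<in> snd B"
  shows "\<exists>v. {e, v} \<in> snd E \<and> p v = b1"
proof -
  have cE: "is_cpx E" and cB: "is_cpx B"
    and kan: "kan_fib (Ex (Ex (Sing E))) (Ex (Ex (Sing B))) (Ex_map (Ex_map (Sing_map p)))"
    using tf unfolding thomason_trivial_fib_def thomason_fib_def by auto
  define P where "P = Ex_map (Ex_map (Sing_map p))"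
  define \<psi> where "\<psi> = (\<lambda>i::nat. if i = 0 then p e else b1)"
  define b where "b = exx 1 \<psi>"
  define ye where "ye = exx 0 (\<lambda>_. e)"
  have "\<psi> ` {0..1} = {p e, b1}" unfolding \<psi>_def by (auto simp: atLeast0_atMost_Suc)
  then have blev: "b \<in> lev (Ex (Ex (Sing B))) 1" unfolding b_def using exx_lev[OF cB] eb by simp
  have "(\<lambda>_::nat. e) ` {0..0} = {e}" by auto
  moreover have "{e} \<in> snd E" using cE e unfolding is_cpx_def by blast
  ultimately have yelev: "ye \<in> lev (Ex (Ex (Sing E))) 0" unfolding ye_def using exx_lev[OF cE] by simp
  have mc: "mono_op 0 1 (coface 1)" unfolding mono_op_def coface_def by auto
  have "face (Ex (Ex (Sing B))) 1 1 b = exx 0 (\<psi> \<circ> coface 1)"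
    unfolding face_def b_def using exx_act[OF mc] by simp
  also have "\<dots> = exx 0 (p \<circ> (\<lambda>_. e))"
    by (rule exx_cong) (simp add: \<psi>_def coface_def)
  also have "\<dots> = P ye" unfolding P_def ye_def exx_map by simp
  finally have fb: "face (Ex (Ex (Sing B))) 1 1 b = P ye" .
  have "\<exists>z\<in>lev (Ex (Ex (Sing E))) 1. P z = b \<and> (\<forall>i\<le>1. i \<noteq> 0 \<longrightarrow> face (Ex (Ex (Sing E))) 1 i z = ye)"
    using kan[unfolded kan_fib_def P_def[symmetric]] blev yelev fb
    apply -
    apply (erule conjE)
    apply (drule spec[of _ 1], drule spec[of _ 0], drule spec[of _ "\<lambda>_. ye"], drule spec[of _ b])
    apply (erule mp)
    using le_Suc_eq by auto
  then obtain z where zlev: "z \<in> lev (Ex (Ex (Sing E))) 1" and Pz: "P z = b"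
      and fz: "face (Ex (Ex (Sing E))) 1 1 z = ye" by auto
  obtain Z where zZ: "z = (1, Z)" and Zlev: "\<And>k cs. cs \<in> sd_chains 1 k \<Longrightarrow> Z cs \<in> lev (Ex (Sing E)) k"
    and Zc: "\<And>k m \<theta> cs. cs \<in> sd_chains 1 k \<Longrightarrow> mono_op m k \<theta> \<Longrightarrow> Z (list_act m \<theta> cs) = act (Ex (Sing E)) k m \<theta> (Z cs)"
    using zlev unfolding Ex_def by auto
  define cs0 :: "nat set list" where "cs0 = [{0}, {0,1}]"
  have cs0: "cs0 \<in> sd_chains 1 1" unfolding cs0_def sd_chains_def
    by (auto simp: less_Suc_eq_le le_Suc_eq nth_Cons')
  have c00: "[{0}] \<in> sd_chains 0 0" unfolding sd_chains_def by auto
  have c10: "[{0}] \<in> sd_chains 1 0" unfolding sd_chains_def by auto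
  have sd00: "[{0::nat}] \<in> sd_all 0" using c00 unfolding sd_all_def by blast
  have sd10: "[{0::nat}] \<in> sd_all 1" using c10 unfolding sd_all_def by blast
  have sd11: "cs0 \<in> sd_all 1" using cs0 unfolding sd_all_def by blast
  obtain g where Zg: "Z cs0 = (1, g)" and glev: "\<And>k c. c \<in> sd_chains 1 k \<Longrightarrow> g c \<in> lev (Sing E) k"
    and gc: "\<And>k m \<theta> c. c \<in> sd_chains 1 k \<Longrightarrow> mono_op m k \<theta> \<Longrightarrow> g (list_act m \<theta> c) = act (Sing E) k m \<theta> (g c)"
    using Zlev[OF cs0] unfolding Ex_def by auto
  have m0: "mono_op 0 1 (\<lambda>_. 0)" unfolding mono_op_def by auto
  have la: "list_act 0 (\<lambda>_. 0) cs0 = [{0}]" unfolding list_act_def cs0_def by simp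
  have "snd (face (Ex (Ex (Sing E))) 1 1 z) [{0}] = snd ye [{0}]" using fz by simp
  moreover have "map ((`) (coface 1)) [{0::nat}] = [{0}]" by (simp add: coface_def)
  ultimately have Z0: "Z [{0}] = (0, restrict (\<lambda>c. map (\<lambda>S. e) c) (sd_all 0))"
    unfolding face_def zZ ye_def exx_def using sd00 by (simp add: Ex_def)
  have "Z [{0}] = act (Ex (Sing E)) 1 0 (\<lambda>_. 0) (Z cs0)" using Zc[OF cs0 m0] la by simp
  then have "snd (Z [{0}]) [{0}] = g [{0}]" using Zg sd00 by (simp add: Ex_def)
  then have g0: "g [{0}] = [e]" using Z0 sd00 by simp
  have "g [{0}] = list_act 0 (\<lambda>_. 0) (g cs0)" using gc[OF cs0 m0] la by (simp add: Sing_def)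
  then have "g cs0 ! 0 = e" using g0 by (simp add: list_act_def)
  moreover have "g cs0 \<in> lev (Sing E) 1" using glev[OF cs0] .
  ultimately obtain v where gv: "g cs0 = [e, v]" and ev: "{e, v} \<in> snd E"
    by (cases "g cs0" rule: list.exhaust; cases "tl (g cs0)"; auto simp: Sing_def)
  have "snd (snd (P z) cs0) cs0 = snd (snd b cs0) cs0" using Pz by simp
  then have "map p (g cs0) = map (\<lambda>S. \<psi> (Max (cs0 ! Max S))) cs0"
    unfolding P_def zZ b_def exx_def Ex_map_def Sing_map_def using sd11 Zg cs0 by (simp add: cs0_def)
  then have "p v = b1" using gv by (simp add: cs0_def \<psi>_def)
  then show ?thesis using ev by blast
qed



lemma quotient_top_open:
  "openin (quotient_top T R) U \<longleftrightarrow> U \<subseteq> topspace T // R \<and> openin T {y \<in> topspace T. R `` {y} \<in> U}"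
proof -
  let ?L = "\<lambda>U. U \<subseteq> topspace T // R \<and> openin T {y \<in> topspace T. R `` {y} \<in> U}"
  have "istopology ?L"
    unfolding istopology_def
  proof (rule conjI; intro allI impI)
    fix S S' assume "?L S" "?L S'"
    moreover have "{y \<in> topspace T. R `` {y} \<in> S \<inter> S'} =
        {y \<in> topspace T. R `` {y} \<in> S} \<inter> {y \<in> topspace T. R `` {y} \<in> S'}" by blast
    ultimately show "?L (S \<inter> S')" by auto
  next
    fix K assume K: "\<forall>S\<in>K. ?L S"
    have "{y \<in> topspace T. R `` {y} \<in> \<Union>K} = \<Union>((\<lambda>S. {y \<in> topspace T. R `` {y} \<in> S}) ` K)" by blast
    moreover have "openin T (\<Union>((\<lambda>S. {y \<in> topspace T. R `` {y} \<in> S}) ` K))"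
      using K by (intro openin_Union) auto
    ultimately show "?L (\<Union>K)" using K by auto
  qed
  then have "openin (quotient_top T R) = ?L" unfolding quotient_top_def by (rule topology_inverse')
  then show ?thesis by (rule fun_cong)
qed

lemma topspace_quotient_top: "topspace (quotient_top T R) = topspace T // R"
proof
  show "topspace (quotient_top T R) \<subseteq> topspace T // R"
    using openin_topspace[of "quotient_top T R"] unfolding quotient_top_open by (rule conjunct1)
  have "{y \<in> topspace T. R `` {y} \<in> topspace T // R} = topspace T"
    using quotientI[of _ "topspace T" R] by blast
  then have "openin (quotient_top T R) (topspace T // R)"
    unfolding quotient_top_open by simp
  then show "topspace T // R \<subseteq> topspace (quotient_top T R)"
    by (rule openin_subset)
qed

lemma real_base_open:
  "openin (real_base X) {y \<in> topspace (real_base X). Pr (fst (snd y))}"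
  unfolding real_base_def openin_sum_topology
proof (intro conjI ballI)
  fix i :: nat
  let ?S = "subtopology (powertop_real UNIV) (standard_simplex i)"
  have "{x. (i, x) \<in> {y \<in> topspace (sum_topology (\<lambda>n. prod_topology (discrete_topology (lev X n))
            (subtopology (powertop_real UNIV) (standard_simplex n))) UNIV). Pr (fst (snd y))}}
        = {xs \<in> lev X i. Pr xs} \<times> topspace ?S" by auto
  moreover have "openin (prod_topology (discrete_topology (lev X i)) ?S) ({xs \<in> lev X i. Pr xs} \<times> topspace ?S)"
    unfolding openin_prod_Times_iff using openin_topspace[of ?S] by auto
  ultimately show "openin (prod_topology (discrete_topology (lev X i)) ?S)
     {x. (i, x) \<in> {y \<in> topspace (sum_topology (\<lambda>n. prod_topology (discrete_topology (lev X n))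
            (subtopology (powertop_real UNIV) (standard_simplex n))) UNIV). Pr (fst (snd y))}}" by simp
qed auto

lemma rtrancl_sym_inv:
  assumes "(z1, z2) \<in> (S \<union> S\<inverse>)\<^sup>*" "\<And>a b. (a, b) \<in> S \<Longrightarrow> P a = P b"
  shows "P z1 = P z2"
  using assms(1)
proof (induction rule: rtrancl_induct)
  case (step y z)
  then show ?case using assms(2) by auto
qed simp

lemma list_act_set:
  assumes "length xs = Suc n" "mono_op m n \<theta>"
  shows "set (list_act m \<theta> xs) \<subseteq> set xs" "xs ! \<theta> 0 \<in> set (list_act m \<theta> xs)"
proof -
  have "\<theta> i < length xs" if "i \<le> m" for i using assms that unfolding mono_op_def by auto
  then show "set (list_act m \<theta> xs) \<subseteq> set xs" unfolding list_act_def by auto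
  have "list_act m \<theta> xs ! 0 = xs ! \<theta> 0" by (simp add: list_act_nth)
  moreover have "list_act m \<theta> xs ! 0 \<in> set (list_act m \<theta> xs)" by (rule nth_mem) simp
  ultimately show "xs ! \<theta> 0 \<in> set (list_act m \<theta> xs)" by simp
qed

lemma vertex_surj:
  assumes tf: "thomason_trivial_fib E B p" and b0: "b0 \<in> fst B"
  shows "\<exists>e\<in>fst E. p e = b0"
proof -
  have tf': "is_cpx E \<and> is_cpx B \<and> cmap E B p \<and> thomason_weq E B p \<and> thomason_fib E B p"
    using tf by (simp only: thomason_trivial_fib_def)
  have cE: "is_cpx E" using tf' by (rule conjunct1)
  have cB: "is_cpx B" using tf' by (elim conjE)
  have tw: "thomason_weq E B p" using tf' by (elim conjE)
  have "smap (Sing E) (Sing B) (Sing_map p) \<and>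
     weak_homotopy_equivalence (realize (Sing E)) (realize (Sing B)) (realize_map (Sing B) (Sing_map p))"
    using tw by (simp only: thomason_weq_def sset_weq_def)
  then have weq0: "weak_homotopy_equivalence (realize (Sing E)) (realize (Sing B)) (realize_map (Sing B) (Sing_map p))"
    by (rule conjunct2)
  have smp: "Sing_map p = map p" by (simp only: Sing_map_def)
  have weq: "weak_homotopy_equivalence (realize (Sing E)) (realize (Sing B)) (realize_map (Sing B) (map p))"
    by (subst smp[symmetric]) (rule weq0)
  define R where "R = {(u, v). {u, v} \<in> snd B}"
  define C where "C = {v. (b0, v) \<in> R\<^sup>*}"
  define P :: "nat \<times> ('b list \<times> (nat \<Rightarrow> real)) \<Rightarrow> bool" where "P = (\<lambda>z. set (fst (snd z)) \<subseteq> C)"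
  have simpC: "\<sigma> \<subseteq> C" if "\<sigma> \<in> snd B" "u \<in> \<sigma>" "u \<in> C" for \<sigma> u
  proof
    fix w assume "w \<in> \<sigma>"
    have cl: "\<forall>\<sigma>\<in>snd B. \<forall>\<tau>. \<tau> \<noteq> {} \<and> \<tau> \<subseteq> \<sigma> \<longrightarrow> \<tau> \<in> snd B" using cB unfolding is_cpx_def by (elim conjE)
    have uw: "{u, w} \<subseteq> \<sigma>" using \<open>u \<in> \<sigma>\<close> \<open>w \<in> \<sigma>\<close> by simp
    have "{u, w} \<in> snd B" using cl[rule_format, OF \<open>\<sigma> \<in> snd B\<close>, of "{u, w}"] uw by simp
    then have "(u, w) \<in> R" unfolding R_def by simp
    then show "w \<in> C" using that(3) unfolding C_def by (auto intro: rtrancl_into_rtrancl)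
  qed
  have step: "P a = P b" if abr: "(a, b) \<in> real_rel (Sing B)" for a b
  proof -
    obtain n m \<theta> xs t where ab0: "a = (m, (act (Sing B) n m \<theta> xs, t))" "b = (n, (xs, simplex_push m \<theta> t))"
      and th: "mono_op m n \<theta>" and xs: "xs \<in> lev (Sing B) n"
      using abr unfolding real_rel_def by blast
    have "act (Sing B) n m \<theta> xs = list_act m \<theta> xs" by (simp add: Sing_def)
    then have ab: "a = (m, (list_act m \<theta> xs, t))" "b = (n, (xs, simplex_push m \<theta> t))" using ab0 by simp_all
    have L: "length xs = Suc n" and sx: "set xs \<in> snd B" using xs by (auto simp: Sing_def)
    note ls = list_act_set[OF L th]
    show ?thesis unfolding ab P_def using ls simpC[OF sx] by auto
  qed
  have inv: "P z1 = P z2" if "(z1, z2) \<in> real_eq (Sing B)" for z1 z2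
    using that unfolding real_eq_def by (rule rtrancl_sym_inv) (rule step)
  define T where "T = real_base (Sing B)"
  define Rq where "Rq = real_eq (Sing B)"
  define Q where "Q = realize (Sing B)"
  have Qdef: "Q = quotient_top T Rq" unfolding Q_def T_def Rq_def realize_def by simp
  have tsQ: "topspace Q = topspace T // Rq" unfolding Qdef topspace_quotient_top ..
  have refl: "y \<in> Rq `` {y}" for y unfolding Rq_def real_eq_def by simp
  have cls: "\<forall>z\<in>Rq `` {y}. P z = P y" for y using inv unfolding Rq_def by (metis ImageE singletonD)
  define W where "W = {U \<in> topspace Q. \<forall>z\<in>U. P z}"
  define W' where "W' = {U \<in> topspace Q. \<forall>z\<in>U. \<not> P z}"
  have inQ: "Rq `` {y} \<in> topspace Q" if "y \<in> topspace T" for y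
    unfolding tsQ using that by (rule quotientI)
  have key1: "(Rq `` {y} \<in> W) = P y" if "y \<in> topspace T" for y
  proof -
    have "(\<forall>z\<in>Rq `` {y}. P z) = P y" using cls[of y] refl[of y] by blast
    then show ?thesis unfolding W_def using inQ[OF that] by simp
  qed
  have key2: "(Rq `` {y} \<in> W') = (\<not> P y)" if "y \<in> topspace T" for y
  proof -
    have "(\<forall>z\<in>Rq `` {y}. \<not> P z) = (\<not> P y)" using cls[of y] refl[of y] by blast
    then show ?thesis unfolding W'_def using inQ[OF that] by simp
  qed
  have pre1: "{y \<in> topspace T. Rq `` {y} \<in> W} = {y \<in> topspace T. set (fst (snd y)) \<subseteq> C}"
    using key1 unfolding P_def by blast
  have pre2: "{y \<in> topspace T. Rq `` {y} \<in> W'} = {y \<in> topspace T. \<not> set (fst (snd y)) \<subseteq> C}"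
    using key2 unfolding P_def by blast
  have "W \<subseteq> topspace T // Rq" unfolding W_def tsQ by blast
  moreover have "openin T {y \<in> topspace T. set (fst (snd y)) \<subseteq> C}" unfolding T_def by (rule real_base_open)
  ultimately have oW: "openin Q W" unfolding Qdef quotient_top_open pre1 by simp
  have "W' \<subseteq> topspace T // Rq" unfolding W'_def tsQ by blast
  moreover have "openin T {y \<in> topspace T. \<not> set (fst (snd y)) \<subseteq> C}" unfolding T_def by (rule real_base_open)
  ultimately have oW': "openin Q W'" unfolding Qdef quotient_top_open pre2 by simp
  have "topspace Q - W = W'"
  proof -
    have "(\<forall>z\<in>U. P z) \<or> (\<forall>z\<in>U. \<not> P z)" "U \<noteq> {}" if UQ: "U \<in> topspace Q" for U
    proof -
      have "U \<in> topspace T // Rq" using UQ tsQ by simp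
      then obtain y where "U = Rq `` {y}" by (rule quotientE)
      moreover note cls[of y] refl[of y]
      ultimately show "(\<forall>z\<in>U. P z) \<or> (\<forall>z\<in>U. \<not> P z)" "U \<noteq> {}" by blast+
    qed
    then show ?thesis unfolding W_def W'_def by blast
  qed
  then have cW: "closedin Q W" unfolding closedin_def W_def using oW' by auto
  define y0 :: "nat \<times> ('b list \<times> (nat \<Rightarrow> real))" where "y0 = (0, ([b0], \<lambda>i. if i = 0 then 1 else 0))"
  have "{b0} \<in> snd B" using cB b0 unfolding is_cpx_def by blast
  then have "[b0] \<in> lev (Sing B) 0" by (simp add: Sing_def)
  moreover have "(\<lambda>i::nat. if i = 0 then 1 else 0 :: real) \<in> standard_simplex 0"
    unfolding standard_simplex_def by auto
  ultimately have y0T: "y0 \<in> topspace T" unfolding T_def real_base_def y0_def by simp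
  define Y0 where "Y0 = Rq `` {y0}"
  have Y0Q: "Y0 \<in> topspace Q" unfolding Y0_def tsQ using y0T by (rule quotientI)
  have "P y0" unfolding P_def y0_def C_def by simp
  then have Y0W: "Y0 \<in> W" unfolding Y0_def using key1[OF y0T] by simp
  define g where "g = realize_map (Sing B) (map p)"
  have "\<forall>y\<in>topspace Q. \<exists>x\<in>topspace (realize (Sing E)). path_component_of Q (g x) y"
    using weq unfolding weak_homotopy_equivalence_def g_def Q_def by (elim conjE)
  then obtain x where x: "x \<in> topspace (realize (Sing E))" and pc: "path_component_of Q (g x) Y0"
    using Y0Q by blast
  have "Collect (path_component_of Q Y0) \<subseteq> W \<or> disjnt (Collect (path_component_of Q Y0)) W"
    by (rule connectedin_clopen_cases[OF path_connectedin_imp_connectedin[OF path_connectedin_path_component_of] cW oW])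
  moreover have "Y0 \<in> Collect (path_component_of Q Y0)" using Y0Q by (simp add: path_component_of_refl)
  moreover have "g x \<in> Collect (path_component_of Q Y0)" using path_component_of_sym[OF pc] by simp
  ultimately have gxW: "g x \<in> W" using Y0W by (auto simp: disjnt_def)
  have "x \<in> topspace (real_base (Sing E)) // real_eq (Sing E)"
    using x unfolding realize_def topspace_quotient_top .
  then obtain w where w: "w \<in> topspace (real_base (Sing E))" and xw: "x = real_eq (Sing E) `` {w}"
    by (auto elim: quotientE)
  obtain n xs t where wd: "w = (n, (xs, t))" by (cases w) auto
  have xsE: "xs \<in> lev (Sing E) n" using w unfolding wd real_base_def by simp
  have "w \<in> x" unfolding xw real_eq_def by simp
  then have "(n, (map p xs, t)) \<in> (\<lambda>(n, x, t). (n, (map p x, t))) ` x" unfolding wd by force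
  then have "(n, (map p xs, t)) \<in> g x" unfolding g_def realize_map_def real_eq_def by blast
  then have "P (n, (map p xs, t))" using gxW unfolding W_def by blast
  then have sub: "p ` set xs \<subseteq> C" unfolding P_def by simp
  have L: "length xs = Suc n" and sxs: "set xs \<in> snd E" using xsE by (auto simp: Sing_def)
  have "hd xs \<in> set xs" using L by (cases xs) auto
  then have e: "hd xs \<in> fst E" and pe: "p (hd xs) \<in> C" using sxs cE sub unfolding is_cpx_def by auto
  have symR: "sym R" unfolding R_def sym_def by (auto simp: insert_commute)
  have "(b0, p (hd xs)) \<in> R\<^sup>*" using pe unfolding C_def by simp
  then have "(p (hd xs), b0) \<in> R\<^sup>*" using symR sym_rtrancl unfolding sym_def by blast
  then show ?thesis
  proof (induction rule: rtrancl_induct)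
    case base
    then show ?case using e by blast
  next
    case (step v v')
    then obtain e' where e': "e' \<in> fst E" "p e' = v" by blast
    have "{p e', v'} \<in> snd B" using step(2) e' unfolding R_def by simp
    then obtain u where "{e', u} \<in> snd E" "p u = v'" using path_lift[OF tf e'(1)] by blast
    moreover then have "u \<in> fst E" using cE unfolding is_cpx_def by auto
    ultimately show ?case by blast
  qed
qed



primrec lpath :: "'e cpx \<Rightarrow> ('e \<Rightarrow> 'b) \<Rightarrow> (nat \<Rightarrow> 'b) \<Rightarrow> 'e \<Rightarrow> nat \<Rightarrow> 'e" where
  "lpath E p b e0 0 = e0"
| "lpath E p b e0 (Suc i) = (SOME v. {lpath E p b e0 i, v} \<in> snd E \<and> p v = b (Suc i))"

lemma cmap_path_iff:
  "cmap (path_graph n) L f \<longleftrightarrow> (\<forall>i\<le>n. f i \<in> fst L) \<and> (\<forall>i\<le>n. {f i} \<in> snd L) \<and>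
      (\<forall>i<n. {f i, f (Suc i)} \<in> snd L)"
proof -
  have "(\<forall>\<sigma>\<in>{{i} |i. i \<le> n} \<union> {{i, Suc i} |i. i < n}. f ` \<sigma> \<in> snd L) \<longleftrightarrow>
        (\<forall>i\<le>n. {f i} \<in> snd L) \<and> (\<forall>i<n. {f i, f (Suc i)} \<in> snd L)"
  proof
    assume H: "\<forall>\<sigma>\<in>{{i} |i. i \<le> n} \<union> {{i, Suc i} |i. i < n}. f ` \<sigma> \<in> snd L"
    have "{f i} \<in> snd L" if "i \<le> n" for i
    proof -
      have "{i} \<in> {{i} |i. i \<le> n} \<union> {{i, Suc i} |i. i < n}" using that by blast
      then have "f ` {i} \<in> snd L" using H by (rule bspec[rotated])
      then show ?thesis by simp
    qed
    moreover have "{f i, f (Suc i)} \<in> snd L" if "i < n" for i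
    proof -
      have "{i, Suc i} \<in> {{i} |i. i \<le> n} \<union> {{i, Suc i} |i. i < n}" using that by blast
      then have "f ` {i, Suc i} \<in> snd L" using H by (rule bspec[rotated])
      then show ?thesis by simp
    qed
    ultimately show "(\<forall>i\<le>n. {f i} \<in> snd L) \<and> (\<forall>i<n. {f i, f (Suc i)} \<in> snd L)" by blast
  next
    assume H: "(\<forall>i\<le>n. {f i} \<in> snd L) \<and> (\<forall>i<n. {f i, f (Suc i)} \<in> snd L)"
    show "\<forall>\<sigma>\<in>{{i} |i. i \<le> n} \<union> {{i, Suc i} |i. i < n}. f ` \<sigma> \<in> snd L"
    proof
      fix \<sigma> assume "\<sigma> \<in> {{i} |i. i \<le> n} \<union> {{i, Suc i} |i. i < n}"
      then consider i where "i \<le> n" "\<sigma> = {i}" | i where "i < n" "\<sigma> = {i, Suc i}" by blast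
      then show "f ` \<sigma> \<in> snd L"
      proof cases
        case 1
        then show ?thesis using H by simp
      next
        case 2
        then show ?thesis using H by simp
      qed
    qed
  qed
  then show ?thesis unfolding cmap_def path_graph_def by auto
qed

lemma is_cpx_path: "is_cpx (path_graph n)"
  unfolding is_cpx_def path_graph_def
proof (intro conjI ballI allI impI)
  fix \<sigma> \<tau> assume s: "\<sigma> \<in> snd ({0..n}, {{i} |i. i \<le> n} \<union> {{i, Suc i} |i. i < n})"
    and t: "\<tau> \<noteq> {} \<and> \<tau> \<subseteq> \<sigma>"
  show "\<tau> \<in> snd ({0..n}, {{i} |i. i \<le> n} \<union> {{i, Suc i} |i. i < n})"
  proof (cases "\<exists>i. i \<le> n \<and> \<sigma> = {i}")
    case True
    then obtain i where "i \<le> n" "\<sigma> = {i}" by blast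
    then have "\<tau> = {i}" using t by blast
    then show ?thesis using \<open>i \<le> n\<close> by auto
  next
    case False
    then obtain i where i: "i < n" "\<sigma> = {i, Suc i}" using s by auto
    then have "\<tau> = {i} \<or> \<tau> = {Suc i} \<or> \<tau> = {i, Suc i}" using t by blast
    then show ?thesis using i by auto
  qed
qed auto

lemma is_cpx_K1: "is_cpx K1"
  unfolding is_cpx_def K1_def by auto

lemma is_cpx_empty: "is_cpx empty_cpx"
  unfolding is_cpx_def empty_cpx_def by auto

lemma cmap_rev:
  assumes "cmap (path_graph n) L f"
  shows "cmap (path_graph n) L (\<lambda>i. f (n - i))"
proof -
  have A: "(\<forall>i\<le>n. f i \<in> fst L) \<and> (\<forall>i\<le>n. {f i} \<in> snd L) \<and> (\<forall>i<n. {f i, f (Suc i)} \<in> snd L)"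
    using assms cmap_path_iff by blast
  have "{f (n - i), f (n - Suc i)} \<in> snd L" if "i < n" for i
  proof -
    have "n - i = Suc (n - Suc i)" "n - Suc i < n" using that by auto
    then show ?thesis using A by (metis insert_commute)
  qed
  then show ?thesis unfolding cmap_path_iff using A by auto
qed

lemma lift_path:
  assumes tf: "thomason_trivial_fib E B p" and bm: "cmap (path_graph n) B b"
    and e0: "e0 \<in> fst E" and pe0: "p e0 = b 0"
  shows "\<exists>h. h 0 = e0 \<and> cmap (path_graph n) E h \<and> (\<forall>i\<le>n. p (h i) = b i)"
proof -
  have cE: "is_cpx E" using tf unfolding thomason_trivial_fib_def by (elim conjE)
  have bA: "(\<forall>i\<le>n. b i \<in> fst B) \<and> (\<forall>i\<le>n. {b i} \<in> snd B) \<and> (\<forall>i<n. {b i, b (Suc i)} \<in> snd B)"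
    using bm cmap_path_iff by blast
  let ?h = "lpath E p b e0"
  have edge: "{?h i, ?h (Suc i)} \<in> snd E \<and> p (?h (Suc i)) = b (Suc i)"
    if "?h i \<in> fst E" "p (?h i) = b i" "i < n" for i
  proof -
    have "{p (?h i), b (Suc i)} \<in> snd B" using bA that by simp
    then have "\<exists>v. {?h i, v} \<in> snd E \<and> p v = b (Suc i)" using path_lift[OF tf that(1)] by blast
    then show ?thesis unfolding lpath.simps by (rule someI_ex)
  qed
  have inv: "i \<le> n \<longrightarrow> ?h i \<in> fst E \<and> p (?h i) = b i" for i
  proof (induction i)
    case 0
    then show ?case using e0 pe0 by simp
  next
    case (Suc i)
    show ?case
    proof
      assume "Suc i \<le> n"
      then have "?h i \<in> fst E" "p (?h i) = b i" "i < n" using Suc by auto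
      note ed = edge[OF this]
      then have "?h (Suc i) \<in> fst E" using cE unfolding is_cpx_def by blast
      then show "?h (Suc i) \<in> fst E \<and> p (?h (Suc i)) = b (Suc i)" using ed by simp
    qed
  qed
  have "cmap (path_graph n) E ?h" unfolding cmap_path_iff
  proof (intro conjI allI impI)
    fix i assume "i \<le> n"
    then show "?h i \<in> fst E" using inv by blast
    then show "{?h i} \<in> snd E" using cE unfolding is_cpx_def by blast
  next
    fix i assume "i < n"
    then show "{?h i, ?h (Suc i)} \<in> snd E" using inv[of i] edge by auto
  qed
  moreover have "\<forall>i\<le>n. p (?h i) = b i" using inv by blast
  moreover have "?h 0 = e0" by simp
  ultimately show ?thesis by blast
qed

lemma lift_path_rev:
  assumes tf: "thomason_trivial_fib E B p" and bm: "cmap (path_graph n) B b"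
    and e0: "e0 \<in> fst E" and pe0: "p e0 = b n"
  shows "\<exists>h. h n = e0 \<and> cmap (path_graph n) E h \<and> (\<forall>i\<le>n. p (h i) = b i)"
proof -
  obtain h where h: "h 0 = e0" "cmap (path_graph n) E h" "\<forall>i\<le>n. p (h i) = b (n - i)"
    using lift_path[OF tf cmap_rev[OF bm] e0] pe0 by auto
  have "cmap (path_graph n) E (\<lambda>i. h (n - i))" by (rule cmap_rev[OF h(2)])
  moreover have "\<forall>i\<le>n. p (h (n - i)) = b i"
  proof (intro allI impI)
    fix i assume i: "i \<le> n"
    have "n - i \<le> n" by simp
    then have "p (h (n - i)) = b (n - (n - i))" using h(3) by blast
    then show "p (h (n - i)) = b i" using i by simp
  qed
  moreover have "(\<lambda>i. h (n - i)) n = e0" using h(1) by simp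
  ultimately show ?thesis by (intro exI[of _ "\<lambda>i. h (n - i)"]) simp
qed



lemma cofibrant_path:
  "thomason_cofibrant TYPE('e) TYPE('b) (path_graph n)"
  unfolding thomason_cofibrant_def thomason_cofib_def
proof (intro conjI allI impI)
  show "is_cpx (empty_cpx :: 'x cpx)" by (rule is_cpx_empty)
  show "is_cpx (path_graph n)" by (rule is_cpx_path)
  show "cmap (empty_cpx :: 'x cpx) (path_graph n) (\<lambda>_. undefined)" unfolding cmap_def empty_cpx_def by simp
  fix E :: "'e cpx" and B :: "'b cpx" and p
  assume tf: "thomason_trivial_fib E B p"
  show "llp (empty_cpx :: 'x cpx) (path_graph n) (\<lambda>_. undefined) E B p"
    unfolding llp_def
  proof (intro allI impI)
    fix a b assume H: "cmap (empty_cpx :: 'x cpx) E a \<and> cmap (path_graph n) B b \<and>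
        (\<forall>v\<in>fst (empty_cpx :: 'x cpx). p (a v) = b undefined)"
    then have bm: "cmap (path_graph n) B b" by blast
    have "b 0 \<in> fst B" using bm unfolding cmap_path_iff by blast
    then obtain e0 where "e0 \<in> fst E" "p e0 = b 0" using vertex_surj[OF tf] by blast
    then obtain h where "cmap (path_graph n) E h" "\<forall>i\<le>n. p (h i) = b i"
      using lift_path[OF tf bm] by blast
    moreover have "\<forall>v\<in>fst (path_graph n). v \<le> n" unfolding path_graph_def by simp
    ultimately show "\<exists>h. cmap (path_graph n) E h \<and> (\<forall>v\<in>fst (empty_cpx :: 'x cpx). h undefined = a v) \<and>
        (\<forall>v\<in>fst (path_graph n). p (h v) = b v)"
      unfolding empty_cpx_def by auto
  qed
qed

lemma cofibrant_K1:
  "thomason_cofibrant TYPE('e) TYPE('b) K1"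
  unfolding thomason_cofibrant_def thomason_cofib_def
proof (intro conjI allI impI)
  show "is_cpx (empty_cpx :: 'x cpx)" by (rule is_cpx_empty)
  show "is_cpx K1" by (rule is_cpx_K1)
  show "cmap (empty_cpx :: 'x cpx) K1 (\<lambda>_. undefined)" unfolding cmap_def empty_cpx_def by simp
  fix E :: "'e cpx" and B :: "'b cpx" and p
  assume tf: "thomason_trivial_fib E B p"
  have cE: "is_cpx E" using tf unfolding thomason_trivial_fib_def by (elim conjE)
  show "llp (empty_cpx :: 'x cpx) K1 (\<lambda>_. undefined) E B p"
    unfolding llp_def
  proof (intro allI impI)
    fix a b assume H: "cmap (empty_cpx :: 'x cpx) E a \<and> cmap K1 B b \<and>
        (\<forall>v\<in>fst (empty_cpx :: 'x cpx). p (a v) = b undefined)"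
    then have "b () \<in> fst B" unfolding cmap_def K1_def by simp
    then obtain e where e: "e \<in> fst E" "p e = b ()" using vertex_surj[OF tf] by blast
    then have "{e} \<in> snd E" using cE unfolding is_cpx_def by blast
    then have "cmap K1 E (\<lambda>_. e)" using e unfolding cmap_def K1_def by simp
    then show "\<exists>h. cmap K1 E h \<and> (\<forall>v\<in>fst (empty_cpx :: 'x cpx). h undefined = a v) \<and>
        (\<forall>v\<in>fst K1. p (h v) = b v)"
      using e unfolding empty_cpx_def K1_def by auto
  qed
qed

lemma cofib_end0:
  "thomason_cofib TYPE('e) TYPE('b) K1 (path_graph n) (\<lambda>_. 0)"
  unfolding thomason_cofib_def
proof (intro conjI allI impI)
  show "is_cpx K1" by (rule is_cpx_K1)
  show "is_cpx (path_graph n)" by (rule is_cpx_path)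
  show "cmap K1 (path_graph n) (\<lambda>_. 0)" unfolding cmap_def K1_def path_graph_def by auto
  fix E :: "'e cpx" and B :: "'b cpx" and p
  assume tf: "thomason_trivial_fib E B p"
  show "llp K1 (path_graph n) (\<lambda>_. 0) E B p"
    unfolding llp_def
  proof (intro allI impI)
    fix a b assume H: "cmap K1 E a \<and> cmap (path_graph n) B b \<and> (\<forall>v\<in>fst K1. p (a v) = b 0)"
    then have bm: "cmap (path_graph n) B b" by blast
    have a: "a () \<in> fst E" "p (a ()) = b 0" using H unfolding cmap_def K1_def by auto
    obtain h where h: "h 0 = a ()" "cmap (path_graph n) E h" "\<forall>i\<le>n. p (h i) = b i"
      using lift_path[OF tf bm a] by blast
    moreover have "\<forall>v\<in>fst (path_graph n). v \<le> n" unfolding path_graph_def by simp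
    ultimately show "\<exists>h. cmap (path_graph n) E h \<and> (\<forall>v\<in>fst K1. h 0 = a v) \<and>
        (\<forall>v\<in>fst (path_graph n). p (h v) = b v)"
      unfolding K1_def by auto
  qed
qed

lemma cofib_endn:
  "thomason_cofib TYPE('e) TYPE('b) K1 (path_graph n) (\<lambda>_. n)"
  unfolding thomason_cofib_def
proof (intro conjI allI impI)
  show "is_cpx K1" by (rule is_cpx_K1)
  show "is_cpx (path_graph n)" by (rule is_cpx_path)
  show "cmap K1 (path_graph n) (\<lambda>_. n)" unfolding cmap_def K1_def path_graph_def by auto
  fix E :: "'e cpx" and B :: "'b cpx" and p
  assume tf: "thomason_trivial_fib E B p"
  show "llp K1 (path_graph n) (\<lambda>_. n) E B p"
    unfolding llp_def
  proof (intro allI impI)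
    fix a b assume H: "cmap K1 E a \<and> cmap (path_graph n) B b \<and> (\<forall>v\<in>fst K1. p (a v) = b n)"
    then have bm: "cmap (path_graph n) B b" by blast
    have a: "a () \<in> fst E" "p (a ()) = b n" using H unfolding cmap_def K1_def by auto
    obtain h where h: "h n = a ()" "cmap (path_graph n) E h" "\<forall>i\<le>n. p (h i) = b i"
      using lift_path_rev[OF tf bm a] by blast
    moreover have "\<forall>v\<in>fst (path_graph n). v \<le> n" unfolding path_graph_def by simp
    ultimately show "\<exists>h. cmap (path_graph n) E h \<and> (\<forall>v\<in>fst K1. h n = a v) \<and>
        (\<forall>v\<in>fst (path_graph n). p (h v) = b v)"
      unfolding K1_def by auto
  qed
qed

theorem lemma6p6:
  fixes n :: nat
  assumes "1 \<le> n"
  shows "thomason_cofibrant TYPE('e) TYPE('b) (path_graph n) \<and>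
         thomason_cofibrant TYPE('e) TYPE('b) K1 \<and>
         thomason_cofib TYPE('e) TYPE('b) K1 (path_graph n) (\<lambda>_. 0) \<and>
         thomason_cofib TYPE('e) TYPE('b) K1 (path_graph n) (\<lambda>_. n)"
  using cofibrant_path cofibrant_K1 cofib_end0 cofib_endn by blast


end
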